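(* Let $(X,d)$ be a complete metric space, $\Lambda$ a finite set, $\mathcal{F}=\{X; f_{\lambda}\mid\lambda\in\Lambda\}$ an iterated function system, and $k\ge2$ an integer. Let $\mathcal{F}^k=\{X; f_{\lambda_{k-1}}\circ\cdots\circ f_{\lambda_0}\mid \lambda_0,\dots,\lambda_{k-1}\in\Lambda\}$ be the iterated function system consisting of all compositions of $k$ maps of $\mathcal{F}$ (indexed by $\Pi=\Lambda^k$). If $\mathcal{F}$ has the average shadowing property on $\mathbb{Z}_+$, then so does $\mathcal{F}^k$.
   Context: An iterated function system (IFS) $\mathcal{G}=\{X; g_{\mu}\mid\mu\in M\}$ on a metric space $(X,d)$ is a family of continuous maps $g_\mu:X\to X$ indexed by a finite nonempty set $M$. For $\sigma=(\mu_0,\mu_1,\dots)\in M^{\mathbb{Z}_+}$ write $\mathcal{G}_{\sigma_n}=g_{\mu_{n-1}}\circ\cdots\circ g_{\mu_0}$ for $n\ge1$ and $\mathcal{G}_{\sigma_0}=\mathrm{id}_X$. For $\delta>0$, a sequence $(x_i)_{i\ge0}$ in $X$ is a $\delta$-average pseudo-orbit of $\mathcal{G}$ if there exist a natural number $N$ and $\sigma=(\mu_0,\mu_1,\dots)\in M^{\mathbb{Z}_+}$ such that for all $n\ge N$, $\frac1n\sum_{i=0}^{n-1}d(g_{\mu_i}(x_i),x_{i+1})<\delta$. A sequence $(x_i)_{i\ge0}$ is $\epsilon$-shadowed in average by $z\in X$ if there exists $\sigma\in M^{\mathbb{Z}_+}$ with $\limsup_{n\to\infty}\frac1n\sum_{i=0}^{n-1}d(\mathcal{G}_{\sigma_i}(z),x_i)<\epsilon$.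 $\mathcal{G}$ has the average shadowing property (on $\mathbb{Z}_+$) if for every $\epsilon>0$ there is $\delta>0$ such that every $\delta$-average pseudo-orbit of $\mathcal{G}$ is $\epsilon$-shadowed in average by some point of $X$. *)

theory Defs
  imports "HOL-Analysis.Analysis" "HOL-Library.Liminf_Limsup"
begin

definition ifs :: "'m set \<Rightarrow> ('m \<Rightarrow> 'a::metric_space \<Rightarrow> 'a) \<Rightarrow> bool" where
  "ifs M g \<longleftrightarrow> finite M \<and> M \<noteq> {} \<and> (\<forall>\<mu>\<in>M. continuous_on UNIV (g \<mu>))"

fun comp_seq :: "('m \<Rightarrow> 'a \<Rightarrow> 'a) \<Rightarrow> (nat \<Rightarrow> 'm) \<Rightarrow> nat \<Rightarrow> 'a \<Rightarrow> 'a" where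
  "comp_seq g \<sigma> 0 = id"
| "comp_seq g \<sigma> (Suc n) = g (\<sigma> n) \<circ> comp_seq g \<sigma> n"

definition avg_pseudo_orbit ::
  "'m set \<Rightarrow> ('m \<Rightarrow> 'a::metric_space \<Rightarrow> 'a) \<Rightarrow> real \<Rightarrow> (nat \<Rightarrow> 'a) \<Rightarrow> bool" where
  "avg_pseudo_orbit M g \<delta> x \<longleftrightarrow>
     (\<exists>N::nat. \<exists>\<sigma>. (\<forall>i. \<sigma> i \<in> M) \<and>
        (\<forall>n\<ge>N. (1 / real n) * (\<Sum>i<n. dist (g (\<sigma> i) (x i)) (x (Suc i))) < \<delta>))"

definition avg_shadowed ::
  "'m set \<Rightarrow> ('m \<Rightarrow> 'a::metric_space \<Rightarrow> 'a) \<Rightarrow> real \<Rightarrow> (nat \<Rightarrow> 'a) \<Rightarrow> 'a \<Rightarrow> bool" where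
  "avg_shadowed M g \<epsilon> x z \<longleftrightarrow>
     (\<exists>\<sigma>. (\<forall>i. \<sigma> i \<in> M) \<and>
        limsup (\<lambda>n. ereal ((1 / real n) * (\<Sum>i<n. dist (comp_seq g \<sigma> i z) (x i)))) < ereal \<epsilon>)"

definition avg_shadowing :: "'m set \<Rightarrow> ('m \<Rightarrow> 'a::metric_space \<Rightarrow> 'a) \<Rightarrow> bool" where
  "avg_shadowing M g \<longleftrightarrow>
     (\<forall>\<epsilon>>0. \<exists>\<delta>>0. \<forall>x. avg_pseudo_orbit M g \<delta> x \<longrightarrow> (\<exists>z. avg_shadowed M g \<epsilon> x z))"

text \<open>The k-fold IFS: indices are words [l0,...,l(k-1)] over Lambda, map f l(k-1) o ... o f l0.\<close>
definition words :: "'m set \<Rightarrow> nat \<Rightarrow> 'm list set" where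
  "words L k = {ls. length ls = k \<and> set ls \<subseteq> L}"

definition word_map :: "('m \<Rightarrow> 'a \<Rightarrow> 'a) \<Rightarrow> 'm list \<Rightarrow> 'a \<Rightarrow> 'a" where
  "word_map f ls = fold (\<lambda>l h. f l \<circ> h) ls id"

end

theory Submission
  imports Defs
begin

lemma word_map_Nil[simp]: "word_map f [] = id"
  by (simp add: word_map_def)

lemma word_map_snoc: "word_map f (xs @ [a]) = f a \<circ> word_map f xs"
  by (simp add: word_map_def)

lemma comp_seq_shift:
  "comp_seq f \<sigma> (a + r) = word_map f (map (\<lambda>t. \<sigma> (a + t)) [0..<r]) \<circ> comp_seq f \<sigma> a"
  by (induction r) (auto simp: word_map_snoc)

lemma comp_seq_blocks:
  assumes "k > 0"
  shows "comp_seq (word_map f) (\<lambda>j. map (\<lambda>t. \<sigma> (j*k + t)) [0..<k]) j = comp_seq f \<sigma> (j*k)"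
proof (induction j)
  case 0 then show ?case by simp
next
  case (Suc j)
  have "comp_seq f \<sigma> (Suc j * k) = comp_seq f \<sigma> (j*k + k)" by (simp add: add.commute)
  also have "\<dots> = word_map f (map (\<lambda>t. \<sigma> (j*k + t)) [0..<k]) \<circ> comp_seq f \<sigma> (j*k)"
    by (rule comp_seq_shift)
  finally show ?case using Suc by simp
qed

lemma divmod_block:
  assumes "r < (k::nat)"
  shows "(k*q + r) div k = q" "(k*q + r) mod k = r"
  using assms by auto

theorem mainTheorem3:
  fixes L :: "'m set" and f :: "'m \<Rightarrow> 'a::complete_space \<Rightarrow> 'a" and k :: nat
  assumes "ifs L f" and "k \<ge> 2" and "avg_shadowing L f"
  shows "avg_shadowing (words L k) (word_map f)"
  unfolding avg_shadowing_def
proof (intro allI impI)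
  fix \<epsilon> :: real assume "\<epsilon> > 0"
  have kpos: "k > 0" using assms(2) by simp
  have "\<epsilon> / k > 0" using \<open>\<epsilon> > 0\<close> kpos by simp
  then obtain \<delta> where dpos: "\<delta> > 0" and sh: "\<And>x. avg_pseudo_orbit L f \<delta> x \<Longrightarrow> \<exists>z. avg_shadowed L f (\<epsilon>/k) x z"
    using assms(3) unfolding avg_shadowing_def by blast
  show "\<exists>\<delta>>0. \<forall>y. avg_pseudo_orbit (words L k) (word_map f) \<delta> y \<longrightarrow> (\<exists>z. avg_shadowed (words L k) (word_map f) \<epsilon> y z)"
  proof (intro exI[of _ \<delta>] conjI allI impI dpos)
    fix y assume "avg_pseudo_orbit (words L k) (word_map f) \<delta> y"
    then obtain N w where wL: "\<And>i. w i \<in> words L k"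
      and wN: "\<And>n. n \<ge> N \<Longrightarrow> (1 / real n) * (\<Sum>i<n. dist (word_map f (w i) (y i)) (y (Suc i))) < \<delta>"
      unfolding avg_pseudo_orbit_def by blast
    have lenw: "\<And>j. length (w j) = k" and setw: "\<And>j. set (w j) \<subseteq> L"
      using wL by (auto simp: words_def)
    define x where "x i = word_map f (take (i mod k) (w (i div k))) (y (i div k))" for i
    define s where "s i = w (i div k) ! (i mod k)" for i
    define e where "e j = dist (word_map f (w j) (y j)) (y (Suc j))" for j
    define e' where "e' i = dist (f (s i) (x i)) (x (Suc i))" for i
    have sL: "s i \<in> L" for i
      unfolding s_def using setw lenw kpos by (metis nth_mem mod_less_divisor subsetD)
    have e'blk: "e' (k*q + r) = (if Suc r = k then e q else 0)" if "r < k" for q r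
    proof (cases "Suc r = k")
      case True
      have "Suc (k*q + r) = k * Suc q + 0" using True by simp
      then have xs: "x (Suc (k*q+r)) = y (Suc q)" unfolding x_def using kpos
        by (metis divmod_block take0 word_map_Nil id_apply)
      have "f (s (k*q+r)) (x (k*q+r)) = word_map f (take (Suc r) (w q)) (y q)"
        unfolding s_def x_def divmod_block[OF that]
        using that lenw by (simp add: take_Suc_conv_app_nth word_map_snoc)
      also have "\<dots> = word_map f (w q) (y q)" using True lenw by simp
      finally show ?thesis using True xs by (simp add: e'_def e_def)
    next
      case False
      then have "Suc r < k" using that by simp
      have "Suc (k*q + r) = k*q + Suc r" by simp
      then have xs: "x (Suc (k*q+r)) = word_map f (take (Suc r) (w q)) (y q)"
        unfolding x_def using divmod_block[OF \<open>Suc r < k\<close>] by simp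
      have "f (s (k*q+r)) (x (k*q+r)) = word_map f (take (Suc r) (w q)) (y q)"
        unfolding s_def x_def divmod_block[OF that]
        using that lenw by (simp add: take_Suc_conv_app_nth word_map_snoc)
      then show ?thesis using False xs by (simp add: e'_def)
    qed
    have divblk: "Suc (k*q + r) div k = (if Suc r = k then Suc q else q)" if "r < k" for q r
    proof (cases "Suc r = k")
      case True
      then have "Suc (k*q + r) = k * Suc q + 0" by simp
      then show ?thesis using True kpos by (metis divmod_block(1))
    next
      case False
      then have "Suc r < k" using that by simp
      then show ?thesis using False divmod_block(1)[of "Suc r" k q] by simp
    qed
    have sumeq: "(\<Sum>i<n. e' i) = (\<Sum>j<n div k. e j)" for n
    proof (induction n)
      case 0 then show ?case by simp
    next
      case (Suc n)
      define q r where "q = n div k" and "r = n mod k"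
      have n: "n = k*q + r" and rk: "r < k" using kpos by (auto simp: q_def r_def)
      show ?case
        using Suc e'blk[OF rk, of q] divblk[OF rk, of q] unfolding n[symmetric] q_def[symmetric]
        by (auto simp: q_def)
    qed
    have enn: "e j \<ge> 0" for j by (simp add: e_def)
    have "avg_pseudo_orbit L f \<delta> x"
      unfolding avg_pseudo_orbit_def
    proof (intro exI[of _ "k*N"] exI[of _ s] conjI allI impI sL)
      fix n assume nN: "n \<ge> k*N"
      have eq: "(\<Sum>i<n. dist (f (s i) (x i)) (x (Suc i))) = (\<Sum>j<n div k. e j)"
        using sumeq[of n] by (simp add: e'_def)
      define m where "m = n div k"
      show "1 / real n * (\<Sum>i<n. dist (f (s i) (x i)) (x (Suc i))) < \<delta>"
      proof (cases "m = 0")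
        case True then show ?thesis using eq dpos by (simp add: m_def)
      next
        case False
        have "m \<ge> N" using nN kpos unfolding m_def
          by (metis div_le_mono nonzero_mult_div_cancel_left not_gr0)
        have mn: "real m \<le> real n" unfolding m_def by simp
        have S: "(\<Sum>j<m. e j) \<ge> 0" using enn by (simp add: sum_nonneg)
        have "1 / real n * (\<Sum>j<m. e j) \<le> 1 / real m * (\<Sum>j<m. e j)"
          using False mn S by (intro mult_right_mono) (auto simp: frac_le)
        also have "\<dots> < \<delta>" using wN[OF \<open>m \<ge> N\<close>] by (simp add: e_def)
        finally show ?thesis using eq by (simp add: m_def)
      qed
    qed
    then obtain z \<sigma> where \<sigma>L: "\<And>i. \<sigma> i \<in> L"
      and ls: "limsup (\<lambda>n. ereal (1 / real n * (\<Sum>i<n. dist (comp_seq f \<sigma> i z) (x i)))) < ereal (\<epsilon>/k)"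
      using sh unfolding avg_shadowed_def by blast
    define S where "S n = 1 / real n * (\<Sum>i<n. dist (comp_seq f \<sigma> i z) (x i))" for n
    define \<tau> where "\<tau> j = map (\<lambda>t. \<sigma> (j*k + t)) [0..<k]" for j
    have \<tau>L: "\<tau> j \<in> words L k" for j using \<sigma>L by (auto simp: \<tau>_def words_def)
    have xblk: "x (j*k) = y j" for j unfolding x_def using kpos by simp
    define T where "T m = 1 / real m * (\<Sum>j<m. dist (comp_seq (word_map f) \<tau> j z) (y j))" for m
    have TS: "T m \<le> real k * S (k*m)" for m
    proof (cases "m = 0")
      case True then show ?thesis by (simp add: T_def S_def)
    next
      case False
      have "(\<Sum>j<m. dist (comp_seq (word_map f) \<tau> j z) (y j))
          = (\<Sum>j<m. dist (comp_seq f \<sigma> (j*k) z) (x (j*k)))"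
      proof -
        have "\<tau> = (\<lambda>j. map (\<lambda>t. \<sigma> (j*k + t)) [0..<k])" by (simp add: \<tau>_def fun_eq_iff)
        then show ?thesis using comp_seq_blocks[OF kpos, of f \<sigma>] xblk by simp
      qed
      also have "\<dots> = (\<Sum>i\<in>(\<lambda>j. j*k) ` {..<m}. dist (comp_seq f \<sigma> i z) (x i))"
        using kpos by (subst sum.reindex) (auto simp: inj_on_def)
      also have "\<dots> \<le> (\<Sum>i<k*m. dist (comp_seq f \<sigma> i z) (x i))"
      proof (rule sum_mono2)
        show "(\<lambda>j. j*k) ` {..<m} \<subseteq> {..<k*m}"
        proof
          fix i assume "i \<in> (\<lambda>j. j*k) ` {..<m}"
          then obtain j where "j < m" "i = j*k" by auto
          then show "i \<in> {..<k*m}" using kpos by (simp add: mult.commute)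
        qed
      qed auto
      finally have le: "(\<Sum>j<m. dist (comp_seq (word_map f) \<tau> j z) (y j)) \<le> (\<Sum>i<k*m. dist (comp_seq f \<sigma> i z) (x i))" .
      have "T m \<le> 1 / real m * (\<Sum>i<k*m. dist (comp_seq f \<sigma> i z) (x i))"
        unfolding T_def using le by (intro mult_left_mono) auto
      also have "\<dots> = real k * S (k*m)" using kpos False by (simp add: S_def)
      finally show ?thesis .
    qed
    from ls have "limsup (\<lambda>n. ereal (S n)) < ereal (\<epsilon>/k)" by (simp add: S_def)
    then obtain c where c1: "limsup (\<lambda>n. ereal (S n)) < ereal c" and c2: "c < \<epsilon>/k"
      using ereal_dense2[of "limsup (\<lambda>n. ereal (S n))" "ereal (\<epsilon>/k)"] by auto
    have "eventually (\<lambda>n. ereal (S n) < ereal c) sequentially"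
      using Limsup_lessD[OF c1] .
    then obtain N0 where N0: "\<And>n. n \<ge> N0 \<Longrightarrow> S n < c" unfolding eventually_sequentially by auto
    have ev: "eventually (\<lambda>m. ereal (T m) \<le> ereal (real k * c)) sequentially"
      unfolding eventually_sequentially
    proof (intro exI[of _ N0] allI impI)
      fix m assume "m \<ge> N0"
      then have "k*m \<ge> N0" proof -
        have "m \<le> k*m" using kpos by simp
        then show ?thesis using \<open>m \<ge> N0\<close> by linarith
      qed
      then have "S (k*m) < c" by (rule N0)
      then have "real k * S (k*m) \<le> real k * c" using kpos by simp
      then show "ereal (T m) \<le> ereal (real k * c)" using TS[of m] by simp
    qed
    have "limsup (\<lambda>m. ereal (T m)) \<le> ereal (real k * c)" by (rule Limsup_bounded[OF ev])
    also have "\<dots> < ereal \<epsilon>" proof -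
      have "c * real k < \<epsilon>" using c2 kpos by (simp add: pos_less_divide_eq)
      then show ?thesis by (simp add: mult.commute)
    qed
    finally have "limsup (\<lambda>m. ereal (T m)) < ereal \<epsilon>" .
    then show "\<exists>z. avg_shadowed (words L k) (word_map f) \<epsilon> y z"
      unfolding avg_shadowed_def T_def using \<tau>L by blast
  qed
qed

end
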